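(* In the setting below, for all natural numbers $n,m\geq1$ with $n\neq m$, $M_n\cap M_m=\emptyset$.
   Context: Work in ZFA (ZF with a set $A$ of atoms, i.e. urelements that have no elements), extended by a primitive binary relation $\preccurlyeq$ on $A$, with Separation and Replacement holding for formulas mentioning $\preccurlyeq$. $A$ is an infinite set of atoms and $\preccurlyeq$ is a pre-ordering (reflexive, transitive) on $A$ with no minimal elements: for every $a\in A$ there is $b\in A$ with $b\preccurlyeq a$ and not $a\preccurlyeq b$. For $a\in A$, $pr(a)=\{b\in A:b\preccurlyeq a\}$; $LO(A,\preccurlyeq)$ is the set of nonempty $x\subseteq A$ with $pr(a)\subseteq x$ for all $a\in x$. For a set $X$ of sets, $LO(X,\subseteq)$ is the set of nonempty $x\subseteq X$ such that for every $y\in x$ and every $z\in X$ with $z\subseteq y$, $z\in x$. The magmatic hierarchy: $M_1=LO(A,\preccurlyeq)$ and $M_{n+1}=LO(M_n,\subseteq)$ for $n\geq1$. *)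

theory Defs
  imports Main
begin

text \<open>A ZFA universe is modelled by a type 'u of objects with a membership
relation mem (mem z y means z is an element of y) and a set A of atoms.
Atoms have no elements; non-atoms (sets) are extensional.\<close>

definition elems :: "('u \<Rightarrow> 'u \<Rightarrow> bool) \<Rightarrow> 'u \<Rightarrow> 'u set" where
  "elems mem y = {z. mem z y}"

definition zfa_universe :: "('u \<Rightarrow> 'u \<Rightarrow> bool) \<Rightarrow> 'u set \<Rightarrow> bool" where
  "zfa_universe mem A \<longleftrightarrow>
     (\<forall>a\<in>A. elems mem a = {}) \<and>
     (\<forall>x y. x \<notin> A \<longrightarrow> y \<notin> A \<longrightarrow> elems mem x = elems mem y \<longrightarrow> x = y)"

definition pr :: "'u set \<Rightarrow> ('u \<Rightarrow> 'u \<Rightarrow> bool) \<Rightarrow> 'u \<Rightarrow> 'u set" where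
  "pr A le a = {b\<in>A. le b a}"

definition LO_pre :: "'u set \<Rightarrow> ('u \<Rightarrow> 'u \<Rightarrow> bool) \<Rightarrow> 'u set set" where
  "LO_pre A le = {x. x \<noteq> {} \<and> x \<subseteq> A \<and> (\<forall>a\<in>x. pr A le a \<subseteq> x)}"

text \<open>LO(X,\<subseteq>) for a set X of sets (objects of the universe), as a collection
of subsets of X; inclusion between objects is inclusion of their elements.\<close>
definition LO_sub :: "('u \<Rightarrow> 'u \<Rightarrow> bool) \<Rightarrow> 'u set \<Rightarrow> 'u set set" where
  "LO_sub mem X = {x. x \<noteq> {} \<and> x \<subseteq> X \<and>
      (\<forall>y\<in>x. \<forall>z\<in>X. elems mem z \<subseteq> elems mem y \<longrightarrow> z \<in> x)}"

text \<open>The magmatic hierarchy, as sets of objects of the universe: an object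
belongs to M n iff it is a set (non-atom) whose set of elements lies in the
corresponding LO collection. M 0 is unused.\<close>
fun magm :: "('u \<Rightarrow> 'u \<Rightarrow> bool) \<Rightarrow> 'u set \<Rightarrow> ('u \<Rightarrow> 'u \<Rightarrow> bool) \<Rightarrow> nat \<Rightarrow> 'u set" where
  "magm mem A le 0 = {}"
| "magm mem A le (Suc 0) = {y. y \<notin> A \<and> elems mem y \<in> LO_pre A le}"
| "magm mem A le (Suc (Suc n)) =
     {y. y \<notin> A \<and> elems mem y \<in> LO_sub mem (magm mem A le (Suc n))}"

end

theory Submission
  imports Defs
begin

lemma magm_notA: "magm mem A le (Suc k) \<inter> A = {}"
  by (cases k) auto

lemma magm1_el: "y \<in> magm mem A le (Suc 0) \<Longrightarrow> \<exists>z. z \<in> elems mem y \<and> z \<in> A"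
  by (auto simp: LO_pre_def)

lemma magm2_el: "y \<in> magm mem A le (Suc (Suc k)) \<Longrightarrow> \<exists>z. z \<in> elems mem y \<and> z \<in> magm mem A le (Suc k)"
  unfolding magm.simps(3) LO_sub_def by blast

lemma magm_disj: "n \<noteq> m \<Longrightarrow> magm mem A le (Suc n) \<inter> magm mem A le (Suc m) = {}"
proof (induction n arbitrary: m)
  case 0
  then obtain m' where m: "m = Suc m'" by (cases m) auto
  show ?case
  proof (rule ccontr)
    assume "\<not> ?case"
    then obtain y where y1: "y \<in> magm mem A le (Suc 0)" and y2: "y \<in> magm mem A le (Suc (Suc m'))"
      using m by auto
    from magm2_el[OF y2] obtain z where "z \<in> elems mem y" "z \<in> magm mem A le (Suc m')" by blast
    moreover have "elems mem y \<subseteq> A" using y1 by (auto simp: LO_pre_def)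
    ultimately show False using magm_notA[of mem A le m'] by blast
  qed
next
  case (Suc n)
  show ?case
  proof (cases m)
    case 0
    show ?thesis
    proof (rule ccontr)
      assume "\<not> ?thesis"
      then obtain y where y1: "y \<in> magm mem A le (Suc 0)" and y2: "y \<in> magm mem A le (Suc (Suc n))"
        using 0 by auto
      from magm2_el[OF y2] obtain z where "z \<in> elems mem y" "z \<in> magm mem A le (Suc n)" by blast
      moreover have "elems mem y \<subseteq> A" using y1 by (auto simp: LO_pre_def)
      ultimately show False using magm_notA[of mem A le n] by blast
    qed
  next
    case (Suc m')
    with Suc.prems have ne: "n \<noteq> m'" by simp
    show ?thesis
    proof (rule ccontr)
      assume "\<not> ?thesis"
      then obtain y where y1: "y \<in> magm mem A le (Suc (Suc n))" and y2: "y \<in> magm mem A le (Suc (Suc m'))"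
        using Suc by auto
      from magm2_el[OF y2] obtain z where z: "z \<in> elems mem y" "z \<in> magm mem A le (Suc m')" by blast
      moreover have "elems mem y \<subseteq> magm mem A le (Suc n)" using y1 unfolding magm.simps(3) LO_sub_def by blast
      ultimately show False using Suc.IH[OF ne] by blast
    qed
  qed
qed

theorem lemma4p8:
  fixes mem :: "'u \<Rightarrow> 'u \<Rightarrow> bool" and A :: "'u set" and le :: "'u \<Rightarrow> 'u \<Rightarrow> bool"
  assumes "zfa_universe mem A"
    and "infinite A"
    and "\<forall>a\<in>A. le a a"
    and "\<forall>a\<in>A. \<forall>b\<in>A. \<forall>c\<in>A. le a b \<longrightarrow> le b c \<longrightarrow> le a c"
    and "\<forall>a\<in>A. \<exists>b\<in>A. le b a \<and> \<not> le a b"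
    and "n \<ge> 1" and "m \<ge> 1" and "n \<noteq> m"
  shows "magm mem A le n \<inter> magm mem A le m = {}"
proof -
  obtain n' where n: "n = Suc n'" using assms(6) by (cases n) auto
  obtain m' where m: "m = Suc m'" using assms(7) by (cases m) auto
  show ?thesis using magm_disj[of n' m' mem A le] assms(8) n m by simp
qed

end
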